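(* Let $a$ be a smooth, positive, increasing function on $(0,\infty)$ and consider the two-dimensional Robertson–Walker spacetime $ds^2=-dt^2+a^2(t)\,d\chi^2$, with comoving worldlines $\beta_0:\chi=0$, $\beta_1:\chi=\chi_1$, $\beta_2:\chi=\chi_2$. Suppose the events $\beta_0(t_0)$, $\beta_1(t_1)$, $\beta_2(t_2)$ lie on one null geodesic in the past-pointing horismos (past light cone) of $\beta_0(t_0)$. Let the optical coordinates of $\beta_1(t_1)$ and $\beta_2(t_2)$ relative to $\beta_0$ be $(t_0,\delta_1)$ and $(t_0,\delta_2)$, with $\delta_2>\delta_1>0$, and let $\delta_{21}$ be the affine distance coordinate of $\beta_2(t_2)$ in the optical coordinates of $\beta_1$. Then $$\delta_2=\delta_1+\frac{a(t_1)}{a(t_0)}\,\delta_{21}.$$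
   Context: Comoving worldlines $\chi=\text{const}$ are parametrized by $t$, their proper time. Optical coordinates $(\textsc{t},\delta)$ relative to a comoving observer $\beta_j$ ($\chi=\chi_j$): an event $(t,\chi)$ has $\textsc{t}$ equal to the proper time of $\beta_j$ at which the event lies on $\beta_j$'s past light cone, i.e. $\int_t^{\textsc{t}}du/a(u)=|\chi-\chi_j|$, and affine distance $\delta=\mathrm{sgn}(\chi-\chi_j)\int_t^{\textsc{t}}\frac{a(u)}{a(\textsc{t})}\,du$. *)

theory Defs
  imports "HOL-Analysis.Analysis"
begin

text \<open>Two-dimensional Robertson--Walker spacetime ds^2 = -dt^2 + a(t)^2 dchi^2,
  events are pairs (t, chi) with t > 0.  The comoving observer beta_j is the
  worldline chi = chi_j, parametrised by proper time t.\<close>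

text \<open>Optical coordinates (T, delta) of the event (t, chi) relative to the comoving
  observer chi = chi_j: T is the proper time of beta_j at which the event lies on the
  past light cone of beta_j, i.e. int_t^T du/a(u) = |chi - chi_j|, and
  delta = sgn(chi - chi_j) * int_t^T a(u)/a(T) du.\<close>
definition optical_coords ::
  "(real \<Rightarrow> real) \<Rightarrow> real \<Rightarrow> real \<Rightarrow> real \<Rightarrow> real \<Rightarrow> real \<Rightarrow> bool" where
  "optical_coords a chij t chi T delta \<longleftrightarrow>
     0 < t \<and> t \<le> T \<and>
     (LBINT u=t..T. 1 / a u) = \<bar>chi - chij\<bar> \<and>
     delta = sgn (chi - chij) * (LBINT u=t..T. a u / a T)"

definition on_past_null_geodesic ::
  "(real \<Rightarrow> real) \<Rightarrow> real \<Rightarrow> real \<Rightarrow> real \<Rightarrow> real \<Rightarrow> real \<Rightarrow> bool" where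
  "on_past_null_geodesic a t0 chi0 s t chi \<longleftrightarrow>
     0 < t \<and> t \<le> t0 \<and> chi = chi0 + s * (LBINT u=t..t0. 1 / a u)"

end

theory Submission
  imports Defs
begin

lemma LI:
  fixes f :: "real \<Rightarrow> real"
  assumes "continuous_on {x..y} f" "x \<le> y"
  shows "(LBINT u=x..y. f u) = integral {x..y} f"
  using interval_integral_eq_integral borel_integrable_atLeastAtMost' assms by blast

theorem lemma1:
  fixes a :: "real \<Rightarrow> real"
    and t0 t1 t2 chi1 chi2 delta1 delta2 delta21 :: real
  assumes smooth: "\<forall>k. \<forall>x>0. ((deriv ^^ k) a) differentiable (at x)"
    and pos: "\<forall>x>0. a x > 0"
    and incr: "strict_mono_on {0<..} a"
    and t0_pos: "0 < t0"
    and geod: "\<exists>s\<in>{-1, 1}. on_past_null_geodesic a t0 0 s t1 chi1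
                             \<and> on_past_null_geodesic a t0 0 s t2 chi2"
    and oc1: "optical_coords a 0 t1 chi1 t0 delta1"
    and oc2: "optical_coords a 0 t2 chi2 t0 delta2"
    and order: "delta2 > delta1" "delta1 > 0"
    and oc21: "\<exists>T. optical_coords a chi1 t2 chi2 T delta21"
  shows "delta2 = delta1 + a t1 / a t0 * delta21"
proof -
  have cont: "continuous_on {x..y} a" if "0 < x" for x y
  proof -
    have "\<forall>z\<in>{x..y}. isCont a z"
      using smooth that by (metis atLeastAtMost_iff differentiable_imp_continuous_within
          funpow_0 less_le_trans)
    thus ?thesis by (simp add: continuous_at_imp_continuous_on)
  qed
  have conti: "continuous_on {x..y} (\<lambda>u. 1 / a u)" if "0 < x" for x y
    using cont[OF that] pos that by (intro continuous_intros) (auto, metis less_le_trans not_less_iff_gr_or_eq)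
  have contd: "continuous_on {x..y} (\<lambda>u. a u / c)" if "0 < x" for x y c
    unfolding divide_inverse by (intro continuous_intros cont[OF that])
  have mono: "a u \<le> a v" if "0 < u" "u \<le> v" for u v
    using incr that by (metis greaterThan_iff less_le_trans order_le_less strict_mono_onD)
  have posI: "integral {x..y} (\<lambda>u. 1 / a u) > 0" if "0 < x" "x < y" for x y
  proof -
    have "integral {x..y} (\<lambda>u. 1 / a y) \<le> integral {x..y} (\<lambda>u. 1 / a u)"
      apply (rule integral_le)
      apply (rule integrable_const_ivl) apply (rule integrable_continuous_interval[OF conti[OF that(1)]])
      using that mono pos by (auto intro!: divide_left_mono)
    moreover have "integral {x..y} (\<lambda>u. 1 / a y) > 0" using that pos by simp
    ultimately show ?thesis by linarith
  qed
  have posA: "integral {x..y} a > 0" if "0 < x" "x < y" for x y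
  proof -
    have "integral {x..y} (\<lambda>u. a x) \<le> integral {x..y} a"
      apply (rule integral_le)
      apply (rule integrable_const_ivl) apply (rule integrable_continuous_interval[OF cont[OF that(1)]])
      using that mono by auto
    moreover have "integral {x..y} (\<lambda>u. a x) > 0" using that pos by simp
    ultimately show ?thesis by linarith
  qed
  have combI: "integral {x..z} (\<lambda>u. 1 / a u) = integral {x..y} (\<lambda>u. 1 / a u) + integral {y..z} (\<lambda>u. 1 / a u)"
    if "0 < x" "x \<le> y" "y \<le> z" for x y z
    using Henstock_Kurzweil_Integration.integral_combine[OF that(2,3) integrable_continuous_interval[OF conti[OF that(1)]]] by simp
  have combA: "integral {x..z} a = integral {x..y} a + integral {y..z} a"
    if "0 < x" "x \<le> y" "y \<le> z" for x y z
    using Henstock_Kurzweil_Integration.integral_combine[OF that(2,3) integrable_continuous_interval[OF cont[OF that(1)]]] by simp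
  have divA: "integral {x..y} (\<lambda>u. a u / c) = integral {x..y} a / c" for x y c
    by (simp add: integral_divide)
  have LIi: "(LBINT u=x..y. 1 / a u) = integral {x..y} (\<lambda>u. 1/a u)" if "0 < x" "x \<le> y" for x y
    using LI[OF conti[OF that(1)] that(2)] .
  have LId: "(LBINT u=x..y. a u / c) = integral {x..y} a / c" if "0 < x" "x \<le> y" for x y c
    using LI[OF contd[OF that(1)] that(2), of c] divA by simp
  from oc1 have t1: "0 < t1" "t1 \<le> t0" unfolding optical_coords_def by auto
  from oc1 have c1: "integral {t1..t0} (\<lambda>u. 1/a u) = \<bar>chi1\<bar>"
    and d1: "delta1 = sgn chi1 * (integral {t1..t0} a / a t0)"
    unfolding optical_coords_def LIi[OF t1] LId[OF t1] by simp_all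
  from oc2 have t2: "0 < t2" "t2 \<le> t0" unfolding optical_coords_def by auto
  from oc2 have c2: "integral {t2..t0} (\<lambda>u. 1/a u) = \<bar>chi2\<bar>"
    and d2: "delta2 = sgn chi2 * (integral {t2..t0} a / a t0)"
    unfolding optical_coords_def LIi[OF t2] LId[OF t2] by simp_all
  have a0: "a t0 > 0" using pos t0_pos by auto
  have IA1: "integral {t1..t0} a \<ge> 0" using posA[of t1 t0] t1 by (cases "t1 = t0") auto
  have IA2: "integral {t2..t0} a \<ge> 0" using posA[of t2 t0] t2 by (cases "t2 = t0") auto
  have chi1p: "chi1 > 0" using order d1 IA1 a0
    by (smt (verit) divide_nonneg_pos mult_nonpos_nonneg sgn_eq_0_iff sgn_le_0_iff zero_le_divide_iff)
  have chi2p: "chi2 > 0" using order d2 IA2 a0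
    by (smt (verit) divide_nonneg_pos mult_nonpos_nonneg sgn_eq_0_iff sgn_le_0_iff zero_le_divide_iff)
  have d1': "delta1 = integral {t1..t0} a / a t0" using d1 chi1p by simp
  have d2': "delta2 = integral {t2..t0} a / a t0" using d2 chi2p by simp
  have t21: "t2 < t1"
  proof (rule ccontr)
    assume "\<not> t2 < t1"
    hence "integral {t1..t0} a = integral {t1..t2} a + integral {t2..t0} a"
      using combA[of t1 t2 t0] t1 t2 \<open>\<not> t2 < t1\<close> by simp
    moreover have "integral {t1..t2} a \<ge> 0" using posA[of t1 t2] t1 \<open>\<not> t2 < t1\<close>
      by (cases "t1 = t2") auto
    ultimately have "delta1 \<ge> delta2" using d1' d2' a0 by (simp add: divide_right_mono)
    thus False using order by simp
  qed
  have chieq: "chi2 - chi1 = integral {t2..t1} (\<lambda>u. 1/a u)"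
    using c1 c2 chi1p chi2p combI[of t2 t1 t0] t1 t2 t21 by auto
  have chigt: "chi2 - chi1 > 0" using chieq posI t2 t21 by auto
  from oc21 obtain T where oT: "optical_coords a chi1 t2 chi2 T delta21" by blast
  hence T: "0 < t2" "t2 \<le> T" unfolding optical_coords_def by auto
  from oT have cT: "integral {t2..T} (\<lambda>u. 1/a u) = \<bar>chi2 - chi1\<bar>"
    and d21: "delta21 = sgn (chi2 - chi1) * (integral {t2..T} a / a T)"
    unfolding optical_coords_def LIi[OF T] LId[OF T] by simp_all
  have TT: "T = t1"
  proof (cases "T < t1")
    case True
    hence "integral {t2..t1} (\<lambda>u. 1/a u) = integral {t2..T} (\<lambda>u. 1/a u) + integral {T..t1} (\<lambda>u. 1/a u)"
      using combI[of t2 T t1] T True by simp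
    thus ?thesis using posI[of T t1] T True cT chieq chigt by auto
  next
    case False
    hence "integral {t2..T} (\<lambda>u. 1/a u) = integral {t2..t1} (\<lambda>u. 1/a u) + integral {t1..T} (\<lambda>u. 1/a u)"
      using combI[of t2 t1 T] T t21 False by simp
    thus ?thesis using posI[of t1 T] t1 False cT chieq chigt by (cases "T = t1") auto
  qed
  have d21': "delta21 = integral {t2..t1} a / a t1" using d21 TT chigt by simp
  have a1: "a t1 > 0" using pos t1 by auto
  have "integral {t2..t0} a = integral {t2..t1} a + integral {t1..t0} a"
    using combA[of t2 t1 t0] t1 t2 t21 by simp
  thus ?thesis using d1' d2' d21' a0 a1 by (simp add: field_simps)
qed

end
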